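(* Suppose $(X,y)$ is orthogonal separable and $\lambda\in\mathbb R^N$ satisfies $\mathrm{diag}(y)\lambda\ge0$. Let $\hat D_0$ be an $N\times N$ diagonal $0/1$ matrix with $u_0=X^T\hat D_0\lambda$ and $\|u_0\|_2\le1$. Then for every diagonal $0/1$ matrix $D_j$ with $\hat D_0-D_j\ge0$ we have $\|X^TD_j\lambda\|_2\le\|u_0\|_2\le1$; consequently, if $D_j\in\mathcal P$, then $\max_{\|u\|_2\le1,\ (2D_j-I)Xu\ge0}\lambda^TD_jXu\le1$.
   Context: $X\in\mathbb R^{N\times d}$ rows $x_n$, $y\in\{\pm1\}^N$. Orthogonal separable: $x_n^Tx_{n'}>0$ if $y_n=y_{n'}$ and $x_n^Tx_{n'}\le0$ if $y_n\ne y_{n'}$. $\mathcal P=\{\mathrm{diag}(\mathbb I(Xw\ge0)):w\in\mathbb R^d\}$. Inequalities between vectors/diagonal matrices are entrywise. *)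

theory Defs
  imports "HOL-Analysis.Analysis"
begin

definition diag_mat :: "real^'n \<Rightarrow> real^'n^'n" where
  "diag_mat v = (\<chi> i j. if i = j then v $ i else 0)"

definition is_diag01 :: "real^'n^'n \<Rightarrow> bool" where
  "is_diag01 D \<longleftrightarrow> (\<forall>i j. i \<noteq> j \<longrightarrow> D $ i $ j = 0) \<and> (\<forall>i. D $ i $ i = 0 \<or> D $ i $ i = 1)"

definition orth_separable :: "real^'d^'n \<Rightarrow> real^'n \<Rightarrow> bool" where
  "orth_separable X y \<longleftrightarrow>
     (\<forall>n n'. (y $ n = y $ n' \<longrightarrow> (X $ n) \<bullet> (X $ n') > 0) \<and>
             (y $ n \<noteq> y $ n' \<longrightarrow> (X $ n) \<bullet> (X $ n') \<le> 0))"

definition act_patterns :: "real^'d^'n \<Rightarrow> (real^'n^'n) set" where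
  "act_patterns X = {diag_mat (\<chi> i. if (X *v w) $ i \<ge> 0 then 1 else 0) | w. True}"

end

theory Submission
  imports Defs
begin

lemma tmv: "transpose X *v z = (\<Sum>i\<in>UNIV. (z $ i) *\<^sub>R (X $ i))"
  for X :: "real^'d^'n"
  by (simp add: vec_eq_iff matrix_vector_mult_def transpose_def sum_component mult.commute)

lemma diagmv: "is_diag01 D \<Longrightarrow> (D *v v) $ i = D $ i $ i * v $ i"
  for D :: "real^'n^'n"
  unfolding is_diag01_def matrix_vector_mult_def
  by (subst sum.remove[of _ i]) (auto intro!: sum.neutral)

lemma diagmv2: "(diag_mat y *v v) $ i = y $ i * v $ i"
  unfolding diag_mat_def matrix_vector_mult_def
  by (subst sum.remove[of _ i]) (auto intro!: sum.neutral)

theorem lemma6: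
  fixes X :: "real^'d^'n" and y :: "real^'n" and lam :: "real^'n"
    and D0 Dj :: "real^'n^'n" and u0 :: "real^'d"
  assumes y_pm: "\<forall>i. y $ i = 1 \<or> y $ i = -1"
    and sep: "orth_separable X y"
    and lam_sign: "\<forall>i. (diag_mat y *v lam) $ i \<ge> 0"
    and D0: "is_diag01 D0"
    and u0_def: "u0 = transpose X *v (D0 *v lam)"
    and u0_le: "norm u0 \<le> 1"
    and Dj: "is_diag01 Dj"
    and D0_ge: "\<forall>i j. (D0 - Dj) $ i $ j \<ge> 0"
  shows "norm (transpose X *v (Dj *v lam)) \<le> norm u0 \<and> norm u0 \<le> 1 \<and>
         (Dj \<in> act_patterns X \<longrightarrow>
            (\<forall>u :: real^'d. norm u \<le> 1 \<and>
                 (\<forall>i. (((2 :: real) *\<^sub>R Dj - mat 1) *v (X *v u)) $ i \<ge> 0) \<longrightarrow>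
               lam \<bullet> (Dj *v (X *v u)) \<le> 1))"
proof -
  define v where "v = transpose X *v (Dj *v lam)"
  define w where "w = (\<Sum>i\<in>UNIV. ((D0 $ i $ i - Dj $ i $ i) * lam $ i) *\<^sub>R (X $ i))"
  have v_eq: "v = (\<Sum>i\<in>UNIV. (Dj $ i $ i * lam $ i) *\<^sub>R (X $ i))"
    unfolding v_def tmv using diagmv[OF Dj] by simp
  have u0_eq: "u0 = (\<Sum>i\<in>UNIV. (D0 $ i $ i * lam $ i) *\<^sub>R (X $ i))"
    unfolding u0_def tmv using diagmv[OF D0] by simp
  have uvw: "u0 = v + w"
    unfolding u0_eq v_eq w_def by (simp add: sum.distrib[symmetric] scaleR_add_left[symmetric] left_diff_distrib)
  have key: "lam $ i * lam $ k * (X $ i \<bullet> X $ k) \<ge> 0" for i k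
  proof -
    have si: "y $ i * lam $ i \<ge> 0" and sk: "y $ k * lam $ k \<ge> 0"
      using lam_sign diagmv2 by metis+
    show ?thesis
    proof (cases "y $ i = y $ k")
      case True
      hence "X $ i \<bullet> X $ k > 0" using sep unfolding orth_separable_def by blast
      moreover have "lam $ i * lam $ k \<ge> 0"
      proof -
        have "lam $ i * lam $ k = (y $ i * lam $ i) * (y $ k * lam $ k)"
          using y_pm[rule_format, of i] y_pm[rule_format, of k] True by auto
        thus ?thesis by (metis mult_nonneg_nonneg si sk)
      qed
      ultimately show ?thesis by simp
    next
      case False
      hence "X $ i \<bullet> X $ k \<le> 0" using sep unfolding orth_separable_def by blast
      moreover have "lam $ i * lam $ k \<le> 0"
      proof -
        have "lam $ i * lam $ k = - ((y $ i * lam $ i) * (y $ k * lam $ k))"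
          using y_pm[rule_format, of i] y_pm[rule_format, of k] False by auto
        thus ?thesis by (metis mult_nonneg_nonneg si sk neg_le_0_iff_le)
      qed
      ultimately show ?thesis by (simp add: mult_nonpos_nonpos)
    qed
  qed
  have dj0: "Dj $ i $ i \<ge> 0" for i using Dj unfolding is_diag01_def by (metis order_refl zero_le_one)
  have dd: "D0 $ i $ i - Dj $ i $ i \<ge> 0" for i using D0_ge by simp
  have vw: "v \<bullet> w \<ge> 0"
    unfolding v_eq w_def inner_sum_left inner_sum_right
  proof (intro sum_nonneg)
    fix i k
    have "(Dj $ i $ i * lam $ i) *\<^sub>R X $ i \<bullet> ((D0 $ k $ k - Dj $ k $ k) * lam $ k) *\<^sub>R X $ k
      = (Dj $ i $ i * (D0 $ k $ k - Dj $ k $ k)) * (lam $ i * lam $ k * (X $ i \<bullet> X $ k))"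
      by (simp add: algebra_simps)
    also have "\<dots> \<ge> 0" by (rule mult_nonneg_nonneg[OF mult_nonneg_nonneg[OF dj0 dd] key])
    finally show "0 \<le> (Dj $ i $ i * lam $ i) *\<^sub>R X $ i \<bullet> ((D0 $ k $ k - Dj $ k $ k) * lam $ k) *\<^sub>R X $ k" .
  qed
  have "(norm u0)^2 = (norm v)^2 + 2 * (v \<bullet> w) + (norm w)^2"
    unfolding uvw by (simp add: power2_norm_eq_inner inner_add_left inner_add_right inner_commute)
  hence "(norm v)^2 \<le> (norm u0)^2" using vw by (simp add: add_nonneg_nonneg)
  hence vle: "norm v \<le> norm u0" by (simp add: power2_le_iff_abs_le)
  have "lam \<bullet> (Dj *v (X *v u)) \<le> 1" if "norm u \<le> 1" for u
  proof -
    have "lam \<bullet> (Dj *v (X *v u)) = (Dj *v lam) \<bullet> (X *v u)"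
      unfolding inner_vec_def by (simp add: diagmv[OF Dj] mult_ac)
    also have "\<dots> = v \<bullet> u"
      unfolding v_def transpose_matrix_vector dot_lmul_matrix ..
    finally have "lam \<bullet> (Dj *v (X *v u)) = v \<bullet> u" .
    also have "\<dots> \<le> norm v * norm u" by (rule Cauchy_Schwarz_ineq2[THEN order_trans[OF abs_ge_self]])
    also have "\<dots> \<le> 1 * 1" using vle u0_le that by (intro mult_mono) auto
    finally show ?thesis by simp
  qed
  thus ?thesis using vle u0_le unfolding v_def by auto
qed

end
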